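(* Let $G=(V,E)$ be a connected finite multigraph without loops with $n=|V|\ge 2$, let $f$ be an admissible function, and let $w$ be a weight function for $G$ (extended to a homomorphism $\mathcal E(G)\to\mathbb Z$). For every $\phi\in\mathcal T(G)$ there exists a nonempty proper subset $S\subset V$ such that $d^f_G(S,\bar S)\le d^f_G(\phi)$. In particular, \[ \min_{\phi\in\mathcal T(G)} d^f_G(\phi)=d^f(G). \]
   Context: An admissible function is a function $f:[0,1]\to[0,\infty)$ that is concave and increasing on $[0,\tfrac12]$ and satisfies $f(x)=f(1-x)$ for all $x\in[0,1]$. For nonempty proper $S\subset V$, $\bar S=V\setminus S$, the cut $[S,\bar S]$ is the set of edges between $S$ and $\bar S$, $b(S,\bar S)=\min(|S|,|\bar S|)/n$, $d^f_G(S,\bar S)=|[S,\bar S]|/f(b(S,\bar S))$ (set to $+\infty$ if the denominator is $0$), and $d^f(G)=\min_S d^f_G(S,\bar S)$. Oriented edges: each edge $e$ with endpoints $a,b$ has orientations $(a,e,b)$ and $(b,e,a)$; if $\overrightarrow e$ is one, $\overleftarrow e$ is the other; $\vec E$ is the set of all orientations. The edge space $\mathcal E(G)$ is the free abelian group on $\vec E$ modulo the relations $\overleftarrow e=-\overrightarrow e$. Each $\rho\in\mathcal E(G)$ is uniquely $\rho=\sum_{\overrightarrow e\in\vec E}\lambda_{\overrightarrow e}\overrightarrow e$ with integers $\lambda_{\overrightarrow e}$ satisfying $\min(\lambda_{\overrightarrow e},\lambda_{\overleftarrow e})=0$; set $|\rho|=\sum\lambda_{\overrightarrow e}$. For $S\subseteq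 V$, $\overrightarrow{[S,\bar S]}=\sum(a,e,b)\in\mathcal E(G)$, summed over edges $e$ joining $a\in S$ to $b\notin S$. The cut space $\mathcal T(G)$ is the subgroup of $\mathcal E(G)$ generated by all $\overrightarrow{[S,\bar S]}$, $S\subseteq V$. A weight function for $G$ is a map $w:\vec E\to\mathbb Z$, with respect to some fixed vertex $v$, satisfying $w(\overleftarrow e)=-w(\overrightarrow e)$, $|w(\overrightarrow e)|\le n$ for all $\overrightarrow e$, and $\sum_{(a,e,b)\in\overrightarrow{[S,\bar S]}}w(a,e,b)=|\bar S|$ whenever $v\in S\subseteq V$; by the first property it extends to a group homomorphism $w:\mathcal E(G)\to\mathbb Z$. For $\phi\in\mathcal T(G)$ define $d^f_G(\phi)=|\phi|/f(|w(\phi)|/n)$, with the convention $d^f_G(\phi)=+\infty$ if $w(\phi)=0$, if $|w(\phi)|>n$, or if $f(|w(\phi)|/n)=0$. (For $\phi=\overrightarrow{[S,\bar S]}$ this agrees with $d^f_G(S,\bar S)$.) *)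

theory Defs
  imports "HOL-Analysis.Analysis" "HOL-Library.Extended_Real"
begin

text \<open>A finite multigraph: vertex set V, edge set E, each edge e has a reference
orientation from src e to tgt e. The oriented edge (src e, e, tgt e) is the
reference orientation; (tgt e, e, src e) is its reverse.
An element of the edge space E(G) is represented by its coefficient function
c :: 'e => int supported on E, where c e is the coefficient of the reference
orientation (a negative value means the reverse orientation carries |c e|).\<close>

definition multigraph :: "'v set \<Rightarrow> 'e set \<Rightarrow> ('e \<Rightarrow> 'v) \<Rightarrow> ('e \<Rightarrow> 'v) \<Rightarrow> bool" where
  "multigraph V E src tgt \<longleftrightarrow> finite V \<and> finite E \<and> (\<forall>e\<in>E. src e \<in> V \<and> tgt e \<in> V)"

definition loopless :: "'e set \<Rightarrow> ('e \<Rightarrow> 'v) \<Rightarrow> ('e \<Rightarrow> 'v) \<Rightarrow> bool" where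
  "loopless E src tgt \<longleftrightarrow> (\<forall>e\<in>E. src e \<noteq> tgt e)"

definition adj_rel :: "'e set \<Rightarrow> ('e \<Rightarrow> 'v) \<Rightarrow> ('e \<Rightarrow> 'v) \<Rightarrow> ('v \<times> 'v) set" where
  "adj_rel E src tgt = (\<Union>e\<in>E. {(src e, tgt e), (tgt e, src e)})"

definition connected_mg :: "'v set \<Rightarrow> 'e set \<Rightarrow> ('e \<Rightarrow> 'v) \<Rightarrow> ('e \<Rightarrow> 'v) \<Rightarrow> bool" where
  "connected_mg V E src tgt \<longleftrightarrow> (\<forall>u\<in>V. \<forall>v\<in>V. (u, v) \<in> (adj_rel E src tgt)\<^sup>*)"

definition admissible :: "(real \<Rightarrow> real) \<Rightarrow> bool" where
  "admissible f \<longleftrightarrow> (\<forall>x\<in>{0..1}. f x \<ge> 0) \<and> concave_on {0..1/2} f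
     \<and> mono_on {0..1/2} f \<and> (\<forall>x\<in>{0..1}. f x = f (1 - x))"

definition edge_space :: "'e set \<Rightarrow> ('e \<Rightarrow> int) set" where
  "edge_space E = {c. \<forall>e. e \<notin> E \<longrightarrow> c e = 0}"

text \<open>|rho|: sum of the (nonnegative) coefficients in the normal form.\<close>
definition rho_norm :: "'e set \<Rightarrow> ('e \<Rightarrow> int) \<Rightarrow> int" where
  "rho_norm E c = (\<Sum>e\<in>E. \<bar>c e\<bar>)"

definition cut_vec :: "'e set \<Rightarrow> ('e \<Rightarrow> 'v) \<Rightarrow> ('e \<Rightarrow> 'v) \<Rightarrow> 'v set \<Rightarrow> 'e \<Rightarrow> int" where
  "cut_vec E src tgt S e =
     (if e \<in> E \<and> src e \<in> S \<and> tgt e \<notin> S then 1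
      else if e \<in> E \<and> tgt e \<in> S \<and> src e \<notin> S then -1 else 0)"

inductive_set cut_space :: "'v set \<Rightarrow> 'e set \<Rightarrow> ('e \<Rightarrow> 'v) \<Rightarrow> ('e \<Rightarrow> 'v) \<Rightarrow> ('e \<Rightarrow> int) set"
  for V E src tgt where
  zero: "(\<lambda>e. 0) \<in> cut_space V E src tgt"
| gen: "S \<subseteq> V \<Longrightarrow> cut_vec E src tgt S \<in> cut_space V E src tgt"
| diff: "x \<in> cut_space V E src tgt \<Longrightarrow> y \<in> cut_space V E src tgt \<Longrightarrow>
         (\<lambda>e. x e - y e) \<in> cut_space V E src tgt"

definition cut_size :: "'e set \<Rightarrow> ('e \<Rightarrow> 'v) \<Rightarrow> ('e \<Rightarrow> 'v) \<Rightarrow> 'v set \<Rightarrow> nat" where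
  "cut_size E src tgt S = card {e\<in>E. (src e \<in> S) \<noteq> (tgt e \<in> S)}"

text \<open>Weight function w, given by its value w0 e = w(src e, e, tgt e) on the reference
orientation; w(tgt e, e, src e) = - w0 e. Extended to the edge space as a homomorphism.\<close>
definition w_ext :: "'e set \<Rightarrow> ('e \<Rightarrow> int) \<Rightarrow> ('e \<Rightarrow> int) \<Rightarrow> int" where
  "w_ext E w0 c = (\<Sum>e\<in>E. c e * w0 e)"

definition weight_function ::
  "'v set \<Rightarrow> 'e set \<Rightarrow> ('e \<Rightarrow> 'v) \<Rightarrow> ('e \<Rightarrow> 'v) \<Rightarrow> 'v \<Rightarrow> ('e \<Rightarrow> int) \<Rightarrow> bool" where
  "weight_function V E src tgt v w0 \<longleftrightarrow> v \<in> V \<and>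
     (\<forall>e\<in>E. \<bar>w0 e\<bar> \<le> int (card V)) \<and>
     (\<forall>S. v \<in> S \<and> S \<subseteq> V \<longrightarrow>
        (\<Sum>e\<in>{e\<in>E. src e \<in> S \<and> tgt e \<notin> S}. w0 e)
      + (\<Sum>e\<in>{e\<in>E. tgt e \<in> S \<and> src e \<notin> S}. - w0 e) = int (card (V - S)))"

definition d_cut :: "'v set \<Rightarrow> 'e set \<Rightarrow> ('e \<Rightarrow> 'v) \<Rightarrow> ('e \<Rightarrow> 'v) \<Rightarrow> (real \<Rightarrow> real) \<Rightarrow> 'v set \<Rightarrow> ereal" where
  "d_cut V E src tgt f S =
     (let b = real (min (card S) (card (V - S))) / real (card V) in
      if f b = 0 then \<infinity> else ereal (real (cut_size E src tgt S) / f b))"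

definition d_graph :: "'v set \<Rightarrow> 'e set \<Rightarrow> ('e \<Rightarrow> 'v) \<Rightarrow> ('e \<Rightarrow> 'v) \<Rightarrow> (real \<Rightarrow> real) \<Rightarrow> ereal" where
  "d_graph V E src tgt f = Min (d_cut V E src tgt f ` {S. S \<noteq> {} \<and> S \<subset> V})"

definition d_phi :: "'v set \<Rightarrow> 'e set \<Rightarrow> (real \<Rightarrow> real) \<Rightarrow> ('e \<Rightarrow> int) \<Rightarrow> ('e \<Rightarrow> int) \<Rightarrow> ereal" where
  "d_phi V E f w0 \<phi> =
     (let k = w_ext E w0 \<phi>; n = card V in
      if k = 0 \<or> \<bar>k\<bar> > int n \<or> f (real_of_int \<bar>k\<bar> / real n) = 0 then \<infinity>
      else ereal (real_of_int (rho_norm E \<phi>) / f (real_of_int \<bar>k\<bar> / real n)))"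

end

theory Submission imports Defs begin

definition nd :: "real \<Rightarrow> real" where "nd y = \<bar>y - of_int (round y)\<bar>"

lemma nd_min: "nd y \<le> \<bar>y - of_int k\<bar>"
proof -
  have a: "of_int (round y) \<ge> y - 1/2" "of_int (round y) \<le> y + 1/2"
    using of_int_round_ge of_int_round_le by auto
  consider "k \<le> round y - 1" | "k = round y" | "k \<ge> round y + 1" by linarith
  then show ?thesis
  proof cases
    case 1 then have "real_of_int k \<le> real_of_int (round y - 1)" by (simp only: of_int_le_iff)
    then have "(of_int k::real) \<le> of_int (round y) - 1" by simp
    then show ?thesis using a unfolding nd_def by linarith
  next
    case 2 then show ?thesis unfolding nd_def by simp
  next
    case 3 then have "real_of_int k \<ge> real_of_int (round y + 1)" by (simp only: of_int_le_iff)
    then have "(of_int k::real) \<ge> of_int (round y) + 1" by simp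
    then show ?thesis using a unfolding nd_def by linarith
  qed
qed

lemma nd_half: "0 \<le> nd y" "nd y \<le> 1/2"
  using of_int_round_ge[of y] of_int_round_le[of y] unfolding nd_def by (simp_all only: abs_le_iff abs_ge_zero, linarith)

lemma nd_add: "nd (y + z) \<le> nd y + nd z"
proof -
  have "nd (y+z) \<le> \<bar>y + z - of_int (round y + round z)\<bar>" by (rule nd_min)
  also have "\<dots> \<le> nd y + nd z" unfolding nd_def by simp
  finally show ?thesis .
qed

lemma nd_neg: "nd (- y) = nd y"
proof -
  have "nd (-y) \<le> nd y" using nd_min[of "-y" "- round y"] unfolding nd_def by simp
  moreover have "nd y \<le> nd (-y)" using nd_min[of "y" "- round (-y)"] unfolding nd_def by simp
  ultimately show ?thesis by simp
qed

lemma nd_01: assumes "0 \<le> y" "y \<le> 1" shows "nd y = min y (1 - y)"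
proof -
  have "nd y \<le> y" using nd_min[of y 0] assms by simp
  moreover have "nd y \<le> 1 - y" using nd_min[of y 1] assms by simp
  moreover have "min y (1-y) \<le> \<bar>y - of_int k\<bar>" for k
  proof (cases "k \<le> 0")
    case True then have "(of_int k::real) \<le> 0" by simp
    then show ?thesis by simp
  next
    case False then have "(of_int k::real) \<ge> 1" by simp
    then show ?thesis by simp
  qed
  ultimately show ?thesis unfolding nd_def by (meson min.bounded_iff order_antisym)
qed

lemma adm_nn: "admissible f \<Longrightarrow> x \<in> {0..1} \<Longrightarrow> f x \<ge> 0"
  unfolding admissible_def by blast
lemma adm_cc: "admissible f \<Longrightarrow> concave_on {0..1/2} f"
  unfolding admissible_def by blast
lemma adm_mono: "admissible f \<Longrightarrow> mono_on {0..1/2} f"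
  unfolding admissible_def by blast
lemma adm_sym: "admissible f \<Longrightarrow> x \<in> {0..1} \<Longrightarrow> f x = f (1 - x)"
  unfolding admissible_def by blast

lemma f_subadd:
  assumes f: "admissible f" and "0 \<le> a" "0 \<le> b" "a + b \<le> 1/2"
  shows "f (a + b) \<le> f a + f b"
proof (cases "a + b = 0")
  case True then have "a = 0" "b = 0" using assms by auto
  then show ?thesis using adm_nn[OF f, of 0] by simp
next
  case False
  then have s: "a + b > 0" using assms by auto
  have cc: "concave_on {0..1/2} f" and nn: "\<forall>x\<in>{0..1}. f x \<ge> 0" using adm_cc[OF f] adm_nn[OF f] by auto
  have f0: "f 0 \<ge> 0" using nn by auto
  have "f ((1 - a/(a+b)) *\<^sub>R 0 + (a/(a+b)) *\<^sub>R (a+b)) \<ge> (1 - a/(a+b)) * f 0 + (a/(a+b)) * f (a+b)"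
    by (rule concave_onD[OF cc]) (use assms s in auto)
  then have 1: "f a \<ge> (1 - a/(a+b)) * f 0 + (a/(a+b)) * f (a+b)" using s by simp
  have "f ((1 - b/(a+b)) *\<^sub>R 0 + (b/(a+b)) *\<^sub>R (a+b)) \<ge> (1 - b/(a+b)) * f 0 + (b/(a+b)) * f (a+b)"
    by (rule concave_onD[OF cc]) (use assms s in auto)
  then have 2: "f b \<ge> (1 - b/(a+b)) * f 0 + (b/(a+b)) * f (a+b)" using s by simp
  have q1: "1 - a/(a+b) \<ge> 0" "1 - b/(a+b) \<ge> 0" using assms s by (auto simp: field_simps)
  have "(a/(a+b)) * f (a+b) + (b/(a+b)) * f (a+b) = ((a+b)/(a+b)) * f (a+b)"
    by (simp only: distrib_right[symmetric] add_divide_distrib[symmetric])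
  then have "(a/(a+b)) * f (a+b) + (b/(a+b)) * f (a+b) = f (a+b)" using s by simp
  moreover have "(1 - a/(a+b)) * f 0 \<ge> 0" "(1 - b/(a+b)) * f 0 \<ge> 0" using q1 f0 by auto
  ultimately show ?thesis using 1 2 by linarith
qed

definition H :: "(real \<Rightarrow> real) \<Rightarrow> real \<Rightarrow> real" where "H f y = f (nd y)"

lemma H_add: assumes f: "admissible f" shows "H f (y + z) \<le> H f y + H f z"
proof -
  have mo: "mono_on {0..1/2} f" using adm_mono[OF f] .
  note h = nd_half[of y] nd_half[of z] nd_half[of "y+z"]
  show ?thesis
  proof (cases "nd y + nd z \<le> 1/2")
    case True
    have "f (nd (y+z)) \<le> f (nd y + nd z)" by (rule mono_onD[OF mo]) (use h True nd_add in auto)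
    also have "\<dots> \<le> f (nd y) + f (nd z)" by (rule f_subadd[OF f]) (use h True in auto)
    finally show ?thesis unfolding H_def .
  next
    case False
    have "f (nd (y+z)) \<le> f (1/2)" by (rule mono_onD[OF mo]) (use h in auto)
    also have "\<dots> = f (nd y + (1/2 - nd y))" by simp
    also have "\<dots> \<le> f (nd y) + f (1/2 - nd y)" by (rule f_subadd[OF f]) (use h in auto)
    finally have 1: "f (nd (y+z)) \<le> f (nd y) + f (1/2 - nd y)" .
    have "f (1/2 - nd y) \<le> f (nd z)" by (rule mono_onD[OF mo]) (use h False in auto)
    with 1 show ?thesis unfolding H_def by simp
  qed
qed

lemma H_neg: "H f (- y) = H f y" unfolding H_def by (simp add: nd_neg)

lemma H_01: assumes f: "admissible f" and "0 \<le> y" "y \<le> 1" shows "H f y = f y"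
proof -
  have sym: "f y = f (1 - y)" by (rule adm_sym[OF f]) (use assms in simp)
  show ?thesis unfolding H_def using nd_01[OF assms(2,3)] sym by (simp add: min_def)
qed


definition Dx :: "'e set \<Rightarrow> ('e \<Rightarrow> 'v) \<Rightarrow> ('e \<Rightarrow> 'v) \<Rightarrow> ('v \<Rightarrow> int) \<Rightarrow> int" where
  "Dx E src tgt x = (\<Sum>e\<in>E. \<bar>x (src e) - x (tgt e)\<bar>)"
definition Wx :: "'e set \<Rightarrow> ('e \<Rightarrow> 'v) \<Rightarrow> ('e \<Rightarrow> 'v) \<Rightarrow> ('e \<Rightarrow> int) \<Rightarrow> ('v \<Rightarrow> int) \<Rightarrow> int" where
  "Wx E src tgt w0 x = (\<Sum>e\<in>E. (x (src e) - x (tgt e)) * w0 e)"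

lemma cut_vec_E: "e \<in> E \<Longrightarrow> cut_vec E src tgt S e = (if src e \<in> S then 1 else 0) - (if tgt e \<in> S then 1 else 0)"
  unfolding cut_vec_def by auto

lemma cut_space_rep:
  assumes "\<phi> \<in> cut_space V E src tgt"
  shows "\<exists>x::'v \<Rightarrow> int. \<forall>e\<in>E. \<phi> e = x (src e) - x (tgt e)"
  using assms
proof induction
  case zero then show ?case by (intro exI[of _ "\<lambda>_. 0"]) auto
next
  case (gen S) then show ?case by (intro exI[of _ "\<lambda>u. if u \<in> S then 1 else 0"]) (auto simp: cut_vec_E)
next
  case (diff x y)
  then obtain a b where "\<forall>e\<in>E. x e = a (src e) - a (tgt e)" "\<forall>e\<in>E. y e = b (src e) - b (tgt e)" by blast
  then show ?case by (intro exI[of _ "\<lambda>u. a u - b u"]) auto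
qed

lemma wcut_split:
  assumes "finite E"
  shows "w_ext E w0 (cut_vec E src tgt S) =
    (\<Sum>e\<in>{e\<in>E. src e \<in> S \<and> tgt e \<notin> S}. w0 e) + (\<Sum>e\<in>{e\<in>E. tgt e \<in> S \<and> src e \<notin> S}. - w0 e)"
proof -
  have "w_ext E w0 (cut_vec E src tgt S) = (\<Sum>e\<in>E. (if src e \<in> S \<and> tgt e \<notin> S then w0 e else 0)
      + (if tgt e \<in> S \<and> src e \<notin> S then - w0 e else 0))"
    unfolding w_ext_def by (rule sum.cong) (auto simp: cut_vec_def)
  also have "\<dots> = (\<Sum>e\<in>E. (if src e \<in> S \<and> tgt e \<notin> S then w0 e else 0))
      + (\<Sum>e\<in>E. (if tgt e \<in> S \<and> src e \<notin> S then - w0 e else 0))" by (rule sum.distrib)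
  also have "\<dots> = (\<Sum>e\<in>{e\<in>E. src e \<in> S \<and> tgt e \<notin> S}. w0 e) + (\<Sum>e\<in>{e\<in>E. tgt e \<in> S \<and> src e \<notin> S}. - w0 e)"
    using assms by (simp add: sum.inter_filter)
  finally show ?thesis .
qed

lemma wcut:
  assumes mg: "multigraph V E src tgt" and wf: "weight_function V E src tgt v w0" and S: "S \<subseteq> V"
  shows "w_ext E w0 (cut_vec E src tgt S) = (if v \<in> S then int (card (V - S)) else - int (card S))"
proof -
  have fE: "finite E" and fV: "finite V" and sv: "\<forall>e\<in>E. src e \<in> V \<and> tgt e \<in> V" using mg unfolding multigraph_def by auto
  have wS: "\<And>S. v \<in> S \<Longrightarrow> S \<subseteq> V \<Longrightarrow> (\<Sum>e\<in>{e\<in>E. src e \<in> S \<and> tgt e \<notin> S}. w0 e)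
      + (\<Sum>e\<in>{e\<in>E. tgt e \<in> S \<and> src e \<notin> S}. - w0 e) = int (card (V - S))"
    using wf unfolding weight_function_def by blast
  have vV: "v \<in> V" using wf unfolding weight_function_def by auto
  show ?thesis
  proof (cases "v \<in> S")
    case True then show ?thesis using wS[OF True S] wcut_split[OF fE, of w0 src tgt S] by simp
  next
    case False
    have 1: "{e\<in>E. src e \<in> V - S \<and> tgt e \<notin> V - S} = {e\<in>E. tgt e \<in> S \<and> src e \<notin> S}" using sv S by auto
    have 2: "{e\<in>E. tgt e \<in> V - S \<and> src e \<notin> V - S} = {e\<in>E. src e \<in> S \<and> tgt e \<notin> S}" using sv S by auto
    have 3: "V - (V - S) = S" using S by auto
    have "(\<Sum>e\<in>{e\<in>E. tgt e \<in> S \<and> src e \<notin> S}. w0 e) + (\<Sum>e\<in>{e\<in>E. src e \<in> S \<and> tgt e \<notin> S}. - w0 e) = int (card S)"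
      using wS[of "V - S"] False vV 1 2 3 by auto
    then show ?thesis using wcut_split[OF fE, of w0 src tgt S] False by (simp add: sum_negf)
  qed
qed

lemma rho_cut:
  assumes "finite E"
  shows "rho_norm E (cut_vec E src tgt S) = int (cut_size E src tgt S)"
proof -
  have "rho_norm E (cut_vec E src tgt S) = (\<Sum>e\<in>E. if (src e \<in> S) \<noteq> (tgt e \<in> S) then 1 else 0)"
    unfolding rho_norm_def by (rule sum.cong) (auto simp: cut_vec_def)
  also have "\<dots> = int (cut_size E src tgt S)" unfolding cut_size_def using assms
    by (simp add: sum.inter_filter[symmetric])
  finally show ?thesis .
qed


lemma card_split: assumes "finite V" "S \<subseteq> V" shows "card S + card (V - S) = card V"
proof -
  have "finite S" "finite (V - S)" using assms finite_subset by auto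
  moreover have "S \<inter> (V - S) = {}" by auto
  ultimately have "card (S \<union> (V - S)) = card S + card (V - S)" by (rule card_Un_disjoint)
  moreover have "S \<union> (V - S) = V" using assms by auto
  ultimately show ?thesis by simp
qed

lemma card_parts: assumes "finite V" "S \<noteq> {}" "S \<subset> V"
  shows "card S > 0" "card (V - S) > 0"
proof -
  have "finite S" using assms finite_subset by auto
  then show "card S > 0" using assms(2) by (simp add: card_gt_0_iff)
  have "V - S \<noteq> {}" using assms(3) by auto
  then show "card (V - S) > 0" using assms(1) by (simp add: card_gt_0_iff)
qed

lemma abs_cast: "\<bar>k\<bar> \<le> int n \<Longrightarrow> real_of_int \<bar>k\<bar> \<le> real n"
proof -
  assume "\<bar>k\<bar> \<le> int n"
  then have "real_of_int \<bar>k\<bar> \<le> real_of_int (int n)" by (simp only: of_int_le_iff)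
  then show ?thesis by simp
qed

lemma const_on: assumes "finite V" "Max (x ` V) = Min (x ` V)" "u \<in> V"
  shows "x u = Max (x ` V)"
proof -
  have "x u \<le> Max (x ` V)" using assms by (intro Max_ge) auto
  moreover have "Min (x ` V) \<le> x u" using assms by (intro Min_le) auto
  ultimately show ?thesis using assms(2) by simp
qed

lemma H_cut:
  assumes f: "admissible f" and fV: "finite V" and S: "S \<subseteq> V"
  shows "H f (real_of_int (if v \<in> S then int (card (V - S)) else - int (card S)) / real (card V))
       = f (real (min (card S) (card (V - S))) / real (card V))"
proof -
  have cs: "card S + card (V - S) = card V" using card_split[OF fV S] .
  have sym: "\<And>x. x\<in>{0..1} \<Longrightarrow> f x = f (1 - x)" using adm_sym[OF f] .
  show ?thesis
  proof (cases "card V = 0")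
    case True then show ?thesis using cs H_01[OF f, of 0] by simp
  next
    case False
    then have n: "real (card V) > 0" by simp
    have e1: "real (card S) / real (card V) = 1 - real (card (V - S)) / real (card V)"
      using cs n by (simp add: field_simps flip: of_nat_add)
    have r1: "real (card (V-S)) / real (card V) \<in> {0..1}" using cs n by (auto simp: field_simps)
    have r2: "real (card S) / real (card V) \<in> {0..1}" using cs n by (auto simp: field_simps)
    have A: "f (real (card S) / real (card V)) = f (real (card (V - S)) / real (card V))"
      using sym[OF r1] e1 by simp
    have M: "f (real (min (card S) (card (V - S))) / real (card V)) = f (real (card (V - S)) / real (card V))"
      using A by (cases "card S \<le> card (V - S)") (auto simp: min_def)
    show ?thesis
    proof (cases "v \<in> S")
      case True then show ?thesis using M H_01[OF f] r1 by simp
    next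
      case False
      have "H f (- real (card S) / real (card V)) = H f (real (card S) / real (card V))"
        using H_neg[of f "real (card S) / real (card V)"] by simp
      then show ?thesis using False M A H_01[OF f] r2 by simp
    qed
  qed
qed

lemma main_ind:
  assumes mg: "multigraph V E src tgt" and f: "admissible f" and wf: "weight_function V E src tgt v w0"
    and Vne: "V \<noteq> {}" and r0: "r \<ge> 0"
    and hr: "\<And>S. S \<noteq> {} \<Longrightarrow> S \<subset> V \<Longrightarrow> r * f (real (min (card S) (card (V - S))) / real (card V)) \<le> real (cut_size E src tgt S)"
  shows "Max (x ` V) \<noteq> Min (x ` V) \<Longrightarrow>
     r * H f (real_of_int (Wx E src tgt w0 x) / real (card V)) \<le> real_of_int (Dx E src tgt x)"
proof (induction "nat (Max (x ` V) - Min (x ` V))" arbitrary: x rule: less_induct)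
  case less
  have fE: "finite E" and fV: "finite V" and sv: "\<And>e. e\<in>E \<Longrightarrow> src e \<in> V \<and> tgt e \<in> V"
    using mg unfolding multigraph_def by auto
  define M where "M = Max (x ` V)"
  define m where "m = Min (x ` V)"
  have xM: "\<And>u. u \<in> V \<Longrightarrow> x u \<le> M" unfolding M_def using fV by auto
  have xm: "\<And>u. u \<in> V \<Longrightarrow> m \<le> x u" unfolding m_def using fV by auto
  have "M \<in> x ` V" unfolding M_def using fV Vne by auto
  then obtain uM where uM: "uM \<in> V" "x uM = M" by auto
  have "m \<in> x ` V" unfolding m_def using fV Vne by auto
  then obtain um where um: "um \<in> V" "x um = m" by auto
  have Mm: "m < M" using less.prems xM um unfolding M_def[symmetric] m_def[symmetric] by force
  define S where "S = {u \<in> V. x u = M}"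
  have Sne: "S \<noteq> {}" using uM unfolding S_def by auto
  have SV: "S \<subset> V" using um Mm unfolding S_def by auto
  define x' where "x' = (\<lambda>u. if u \<in> S then x u - 1 else x u)"
  have xlt: "\<And>u. u \<in> V \<Longrightarrow> u \<notin> S \<Longrightarrow> x u < M" using xM unfolding S_def by force
  have eD: "\<bar>x (src e) - x (tgt e)\<bar> = \<bar>x' (src e) - x' (tgt e)\<bar> + (if (src e \<in> S) \<noteq> (tgt e \<in> S) then 1 else 0)"
    if "e \<in> E" for e
  proof -
    have "src e \<in> V" "tgt e \<in> V" using sv[OF that] by auto
    then show ?thesis unfolding x'_def using xlt[of "src e"] xlt[of "tgt e"] unfolding S_def by auto
  qed
  have D: "Dx E src tgt x = Dx E src tgt x' + int (cut_size E src tgt S)"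
  proof -
    have "Dx E src tgt x = (\<Sum>e\<in>E. \<bar>x' (src e) - x' (tgt e)\<bar> + (if (src e \<in> S) \<noteq> (tgt e \<in> S) then 1 else 0))"
      unfolding Dx_def by (rule sum.cong) (auto simp: eD)
    also have "\<dots> = Dx E src tgt x' + (\<Sum>e\<in>E. if (src e \<in> S) \<noteq> (tgt e \<in> S) then 1 else 0)"
      unfolding Dx_def by (rule sum.distrib)
    also have "(\<Sum>e\<in>E. if (src e \<in> S) \<noteq> (tgt e \<in> S) then 1 else 0) = int (cut_size E src tgt S)"
      unfolding cut_size_def using fE by (simp add: sum.inter_filter[symmetric])
    finally show ?thesis .
  qed
  have W: "Wx E src tgt w0 x = Wx E src tgt w0 x' + w_ext E w0 (cut_vec E src tgt S)"
  proof -
    have "Wx E src tgt w0 x = (\<Sum>e\<in>E. (x' (src e) - x' (tgt e)) * w0 e + cut_vec E src tgt S e * w0 e)"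
      unfolding Wx_def by (rule sum.cong) (auto simp: cut_vec_E x'_def algebra_simps)
    then show ?thesis unfolding Wx_def w_ext_def by (simp add: sum.distrib)
  qed
  define k where "k = w_ext E w0 (cut_vec E src tgt S)"
  have kv: "k = (if v \<in> S then int (card (V - S)) else - int (card S))"
    unfolding k_def using wcut[OF mg wf] SV by auto
  have Hk: "H f (real_of_int k / real (card V)) = f (real (min (card S) (card (V - S))) / real (card V))"
    unfolding kv using H_cut[OF f fV] SV by auto
  have cutb: "r * H f (real_of_int k / real (card V)) \<le> real (cut_size E src tgt S)"
    using hr[OF Sne SV] Hk by simp
  let ?n = "real (card V)"
  show ?case
  proof (cases "Max (x' ` V) = Min (x' ` V)")
    case True
    have c: "\<And>u. u \<in> V \<Longrightarrow> x' u = Max (x' ` V)"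
      using const_on[OF fV True] .
    have W0: "Wx E src tgt w0 x' = 0" unfolding Wx_def using sv c by (auto intro!: sum.neutral)
    have D0: "Dx E src tgt x' = 0" unfolding Dx_def using sv c by (auto intro!: sum.neutral)
    show ?thesis using W0 D0 W D cutb unfolding k_def by simp
  next
    case False
    have x'M: "\<And>u. u \<in> V \<Longrightarrow> x' u \<le> M - 1" unfolding x'_def using xlt unfolding S_def by force
    have x'm: "\<And>u. u \<in> V \<Longrightarrow> m \<le> x' u" unfolding x'_def using xm Mm unfolding S_def by force
    have "Max (x' ` V) \<le> M - 1" using x'M fV Vne by auto
    moreover have "m \<le> Min (x' ` V)" using x'm fV Vne by auto
    moreover have "Min (x' ` V) \<le> Max (x' ` V)" using fV Vne by (intro Min_le Max_in) auto
    ultimately have lt: "nat (Max (x' ` V) - Min (x' ` V)) < nat (Max (x ` V) - Min (x ` V))"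
      using Mm unfolding M_def m_def by linarith
    have IH: "r * H f (real_of_int (Wx E src tgt w0 x') / ?n) \<le> real_of_int (Dx E src tgt x')"
      using less.hyps[OF lt False] .
    have hh: "H f (real_of_int (Wx E src tgt w0 x) / ?n)
       \<le> H f (real_of_int (Wx E src tgt w0 x') / ?n) + H f (real_of_int k / ?n)"
      using H_add[OF f, of "real_of_int (Wx E src tgt w0 x') / ?n" "real_of_int k / ?n"]
      unfolding W k_def by (simp add: add_divide_distrib)
    have "r * H f (real_of_int (Wx E src tgt w0 x) / ?n)
       \<le> r * H f (real_of_int (Wx E src tgt w0 x') / ?n) + r * H f (real_of_int k / ?n)"
      using mult_left_mono[OF hh r0] by (simp add: distrib_left)
    then show ?thesis using IH cutb D by simp
  qed
qed


lemma H_abs: assumes f: "admissible f" and "\<bar>y\<bar> \<le> 1" shows "H f y = f \<bar>y\<bar>"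
proof (cases "y \<ge> 0")
  case True then show ?thesis using H_01[OF f] assms by simp
next
  case False then show ?thesis using H_01[OF f, of "-y"] H_neg[of f y] assms by simp
qed

lemma dcut_eq:
  assumes mg: "multigraph V E src tgt" and f: "admissible f" and wf: "weight_function V E src tgt v w0"
    and Sne: "S \<noteq> {}" and SV: "S \<subset> V"
  shows "d_phi V E f w0 (cut_vec E src tgt S) = d_cut V E src tgt f S"
proof -
  have fE: "finite E" and fV: "finite V" using mg unfolding multigraph_def by auto
  define k where "k = w_ext E w0 (cut_vec E src tgt S)"
  have kv: "k = (if v \<in> S then int (card (V - S)) else - int (card S))"
    unfolding k_def using wcut[OF mg wf] SV by auto
  have c1: "card S > 0" and c2: "card (V - S) > 0" using card_parts[OF fV Sne SV] by auto
  have cs: "card S + card (V - S) = card V" using card_split[OF fV] SV by auto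
  have k0: "k \<noteq> 0" using kv c1 c2 by auto
  have kn: "\<bar>k\<bar> \<le> int (card V)" using kv cs by auto
  have n: "real (card V) > 0" using cs c1 by simp
  have "\<bar>real_of_int k / real (card V)\<bar> \<le> 1" using abs_cast[OF kn] n
    by simp
  then have "H f (real_of_int k / real (card V)) = f (real_of_int \<bar>k\<bar> / real (card V))"
    using H_abs[OF f] n by simp
  moreover have "H f (real_of_int k / real (card V)) = f (real (min (card S) (card (V - S))) / real (card V))"
    unfolding kv using H_cut[OF f fV] SV by auto
  ultimately have fe: "f (real_of_int \<bar>k\<bar> / real (card V)) = f (real (min (card S) (card (V - S))) / real (card V))"
    by simp
  show ?thesis
    unfolding d_phi_def d_cut_def Let_def k_def[symmetric] using k0 kn fe rho_cut[OF fE, of src tgt S]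
    by simp
qed


theorem lemma3:
  fixes V :: "'v set" and E :: "'e set" and src tgt :: "'e \<Rightarrow> 'v"
    and f :: "real \<Rightarrow> real" and v :: 'v and w0 :: "'e \<Rightarrow> int"
  assumes "multigraph V E src tgt" and "loopless E src tgt"
    and "connected_mg V E src tgt" and "card V \<ge> 2"
    and "admissible f"
    and "weight_function V E src tgt v w0"
  shows "(\<forall>\<phi>\<in>cut_space V E src tgt. \<exists>S. S \<noteq> {} \<and> S \<subset> V \<and>
            d_cut V E src tgt f S \<le> d_phi V E f w0 \<phi>)
       \<and> d_graph V E src tgt f \<in> d_phi V E f w0 ` cut_space V E src tgt
       \<and> (\<forall>\<phi>\<in>cut_space V E src tgt. d_graph V E src tgt f \<le> d_phi V E f w0 \<phi>)"
proof -
  note mg = assms(1) and f = assms(5) and wf = assms(6)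
  have fE: "finite E" and fV: "finite V" using mg unfolding multigraph_def by auto
  define SS where "SS = {S. S \<noteq> {} \<and> S \<subset> V}"
  have "SS \<subseteq> Pow V" unfolding SS_def by auto
  then have fSS: "finite SS" by (rule finite_subset) (simp add: fV)
  have Vne: "V \<noteq> {}" using assms(4) by auto
  then obtain u where u: "u \<in> V" by auto
  have "V \<noteq> {u}" using assms(4) by auto
  then have "{u} \<subset> V" using u by auto
  then have uSS: "{u} \<in> SS" unfolding SS_def by auto
  let ?n = "real (card V)"
  have npos: "?n > 0" using assms(4) by simp
  define b where "b S = real (min (card S) (card (V - S))) / ?n" for S
  have fnn: "\<And>x. x \<in> {0..1} \<Longrightarrow> f x \<ge> 0" using adm_nn[OF f] .
  have mo: "mono_on {0..1/2} f" and cc: "concave_on {0..1/2} f" using adm_mono[OF f] adm_cc[OF f] by auto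
  have bS: "0 < b S \<and> b S \<le> 1/2" if "S \<in> SS" for S
  proof -
    have Sne: "S \<noteq> {}" and SV: "S \<subset> V" using that unfolding SS_def by auto
    have c1: "card S > 0" and c2: "card (V - S) > 0" using card_parts[OF fV Sne SV] by auto
    have cs: "card S + card (V - S) = card V" using card_split[OF fV] SV by auto
    have "real (min (card S) (card (V - S))) > 0" using c1 c2 by simp
    moreover have "2 * real (min (card S) (card (V - S))) \<le> ?n" using cs by (simp add: min_def flip: of_nat_add)
    ultimately show ?thesis unfolding b_def using npos by (auto simp: field_simps)
  qed
  have P1: "\<exists>S\<in>SS. d_cut V E src tgt f S \<le> d_phi V E f w0 \<phi>" if phi: "\<phi> \<in> cut_space V E src tgt" for \<phi>
  proof (cases "f (1/2) = 0")
    case True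
    have "d_phi V E f w0 \<phi> = \<infinity>"
    proof -
      define k where "k = w_ext E w0 \<phi>"
      have "f (real_of_int \<bar>k\<bar> / ?n) = 0" if "\<bar>k\<bar> \<le> int (card V)"
      proof -
        have y: "real_of_int \<bar>k\<bar> / ?n \<in> {0..1}" using abs_cast[OF that] npos
          by (simp add: field_simps)
        have "f (real_of_int \<bar>k\<bar> / ?n) = H f (real_of_int \<bar>k\<bar> / ?n)" using H_01[OF f] y by simp
        also have "\<dots> \<le> f (1/2)" unfolding H_def by (rule mono_onD[OF mo]) (use nd_half in auto)
        finally show ?thesis using True fnn[OF y] by simp
      qed
      then have disj: "k = 0 \<or> \<bar>k\<bar> > int (card V) \<or> f (real_of_int \<bar>k\<bar> / ?n) = 0" by force
      show ?thesis unfolding d_phi_def Let_def k_def[symmetric] by (simp only: if_P[OF disj])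
    qed
    then show ?thesis using uSS by auto
  next
    case False
    have fh: "f (1/2) > 0" using False fnn[of "1/2"] by auto
    have f0: "f 0 \<ge> 0" using fnn by auto
    have fb: "f (b S) > 0" if "S \<in> SS" for S
    proof -
      have "f ((1 - 2 * b S) *\<^sub>R 0 + (2 * b S) *\<^sub>R (1/2)) \<ge> (1 - 2 * b S) * f 0 + (2 * b S) * f (1/2)"
        by (rule concave_onD[OF cc]) (use bS[OF that] in auto)
      moreover have "(1 - 2 * b S) * f 0 \<ge> 0" using bS[OF that] f0 by auto
      moreover have "(2 * b S) * f (1/2) > 0" using bS[OF that] fh by auto
      ultimately show ?thesis by simp
    qed
    define g where "g S = real (cut_size E src tgt S) / f (b S)" for S
    have "Min (g ` SS) \<in> g ` SS" using fSS uSS by (intro Min_in) auto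
    then obtain S0 where S0a: "S0 \<in> SS" "g S0 = Min (g ` SS)" by auto
    have S0: "S0 \<in> SS" "\<And>S. S \<in> SS \<Longrightarrow> g S0 \<le> g S"
      using S0a fSS by auto
    define r where "r = g S0"
    have r0: "r \<ge> 0" unfolding r_def g_def using fb[OF S0(1)] by simp
    have hr: "r * f (b S) \<le> real (cut_size E src tgt S)" if "S \<in> SS" for S
      using S0(2)[OF that] fb[OF that] unfolding r_def g_def by (simp add: field_simps)
    have dS0: "d_cut V E src tgt f S0 = ereal r"
      unfolding d_cut_def r_def g_def Let_def b_def[symmetric] using fb[OF S0(1)] by simp
    obtain x where x: "\<forall>e\<in>E. \<phi> e = x (src e) - x (tgt e)" using cut_space_rep[OF phi] by blast
    have wx: "w_ext E w0 \<phi> = Wx E src tgt w0 x" unfolding w_ext_def Wx_def using x by (auto intro!: sum.cong)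
    have rx: "rho_norm E \<phi> = Dx E src tgt x" unfolding rho_norm_def Dx_def using x by (auto intro!: sum.cong)
    define k where "k = Wx E src tgt w0 x"
    show ?thesis
    proof (cases "k = 0 \<or> \<bar>k\<bar> > int (card V) \<or> f (real_of_int \<bar>k\<bar> / ?n) = 0")
      case True
      then have "d_phi V E f w0 \<phi> = \<infinity>" unfolding d_phi_def Let_def wx k_def[symmetric] by auto
      then show ?thesis using S0(1) by auto
    next
      case False
      have sv: "\<And>e. e\<in>E \<Longrightarrow> src e \<in> V \<and> tgt e \<in> V" using mg unfolding multigraph_def by auto
      have nc: "Max (x ` V) \<noteq> Min (x ` V)"
      proof
        assume eq: "Max (x ` V) = Min (x ` V)"
        have c: "\<And>u. u \<in> V \<Longrightarrow> x u = Max (x ` V)"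
          using const_on[OF fV eq] .
        have "k = 0" unfolding k_def Wx_def using sv c by (auto intro!: sum.neutral)
        then show False using False by simp
      qed
      have hrr: "\<And>S. S \<noteq> {} \<Longrightarrow> S \<subset> V \<Longrightarrow> r * f (real (min (card S) (card (V - S))) / ?n) \<le> real (cut_size E src tgt S)"
        using hr unfolding SS_def b_def by auto
      have main: "r * H f (real_of_int k / ?n) \<le> real_of_int (Dx E src tgt x)"
        unfolding k_def by (rule main_ind[OF mg f wf Vne r0 hrr nc])
      have kn: "\<bar>k\<bar> \<le> int (card V)" using False by simp
      have "\<bar>real_of_int k / ?n\<bar> \<le> 1" using abs_cast[OF kn] npos
        by simp
      then have Hk: "H f (real_of_int k / ?n) = f (real_of_int \<bar>k\<bar> / ?n)"
        using H_abs[OF f] npos by simp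
      have fk: "f (real_of_int \<bar>k\<bar> / ?n) > 0"
      proof -
        have y: "real_of_int \<bar>k\<bar> / ?n \<in> {0..1}" using abs_cast[OF kn] npos
          by (simp add: field_simps)
        then show ?thesis using fnn[OF y] False by simp
      qed
      have le: "r \<le> real_of_int (Dx E src tgt x) / f (real_of_int \<bar>k\<bar> / ?n)"
        using main Hk fk by (simp add: field_simps)
      have "d_phi V E f w0 \<phi> = ereal (real_of_int (Dx E src tgt x) / f (real_of_int \<bar>k\<bar> / ?n))"
        unfolding d_phi_def Let_def wx k_def[symmetric] rx using False by simp
      then have "d_cut V E src tgt f S0 \<le> d_phi V E f w0 \<phi>" using le dS0 by (simp del: of_int_abs)
      then show ?thesis using S0(1) by blast
    qed
  qed
  have dg: "d_graph V E src tgt f = Min (d_cut V E src tgt f ` SS)" unfolding d_graph_def SS_def ..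
  have part1: "\<forall>\<phi>\<in>cut_space V E src tgt. \<exists>S. S \<noteq> {} \<and> S \<subset> V \<and> d_cut V E src tgt f S \<le> d_phi V E f w0 \<phi>"
    using P1 unfolding SS_def by blast
  have "Min (d_cut V E src tgt f ` SS) \<in> d_cut V E src tgt f ` SS" using fSS uSS by (intro Min_in) auto
  then obtain S1 where S1: "S1 \<in> SS" "d_graph V E src tgt f = d_cut V E src tgt f S1" using dg by auto
  have part2: "d_graph V E src tgt f \<in> d_phi V E f w0 ` cut_space V E src tgt"
  proof
    show "d_graph V E src tgt f = d_phi V E f w0 (cut_vec E src tgt S1)"
      using S1 dcut_eq[OF mg f wf] unfolding SS_def by auto
    show "cut_vec E src tgt S1 \<in> cut_space V E src tgt" using S1 unfolding SS_def by (auto intro: cut_space.gen)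
  qed
  have part3: "\<forall>\<phi>\<in>cut_space V E src tgt. d_graph V E src tgt f \<le> d_phi V E f w0 \<phi>"
  proof
    fix \<phi> assume "\<phi> \<in> cut_space V E src tgt"
    then obtain S where S: "S \<in> SS" "d_cut V E src tgt f S \<le> d_phi V E f w0 \<phi>" using P1 by blast
    have "d_graph V E src tgt f \<le> d_cut V E src tgt f S" unfolding dg using fSS S(1) by (intro Min_le) auto
    then show "d_graph V E src tgt f \<le> d_phi V E f w0 \<phi>" using S(2) by (rule order_trans)
  qed
  show ?thesis using part1 part2 part3 by blast
qed

end
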